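(* Let $T_n(y)$ and $U_n(y)$ denote the Chebyshev polynomials of the first and second kind, extended to all integer indices. For all $x,y,r\in\mathbb{C}$ and all integers $c,n$ with $n\ge c$ (and $x\neq0$ if $c<0$), \[ \sum_{k=c}^n r^{n-k}x^k\big(rT_k(y)+(xy-r)U_k(y)\big)=x^{n+1}y\,U_n(y)-r^{n-c+1}x^c y\,U_{c-1}(y) \] and \[ \sum_{k=c}^n r^{n-k}x^k\big((y^2-1)r\,U_{k-2}(y)+(xy-r)T_k(y)\big)=x^{n+1}y\,T_n(y)-r^{n-c+1}x^c y\,T_{c-1}(y). \]
   Context: The Chebyshev polynomials are defined by $T_0(y)=1$, $T_1(y)=y$, $T_n(y)=2yT_{n-1}(y)-T_{n-2}(y)$ and $U_0(y)=1$, $U_1(y)=2y$, $U_n(y)=2yU_{n-1}(y)-U_{n-2}(y)$ for $n\ge 2$; they are extended to negative indices so that these recurrences hold for all integers $n$ (equivalently $T_{-n}(y)=T_n(y)$ and $U_{-n}(y)=2yU_{-(n-1)}(y)-U_{-(n-2)}(y)$, so $U_{-1}(y)=0$). *)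

theory Defs
  imports Complex_Main
begin

function cheb_rec :: "complex \<Rightarrow> complex \<Rightarrow> complex \<Rightarrow> int \<Rightarrow> complex" where
  "cheb_rec a0 a1 y n =
     (if n = 0 then a0
      else if n = 1 then a1
      else if n \<ge> 2 then 2 * y * cheb_rec a0 a1 y (n - 1) - cheb_rec a0 a1 y (n - 2)
      else 2 * y * cheb_rec a0 a1 y (n + 1) - cheb_rec a0 a1 y (n + 2))"
  by pat_completeness auto
termination
  by (relation "measure (\<lambda>(a0, a1, y, n). nat (if n \<ge> 0 then 2 * n else 1 - 2 * n))") auto

definition chebT :: "int \<Rightarrow> complex \<Rightarrow> complex" where
  "chebT n y = cheb_rec 1 y y n"

definition chebU :: "int \<Rightarrow> complex \<Rightarrow> complex" where
  "chebU n y = cheb_rec 1 (2 * y) y n"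

end

theory Submission
  imports Defs
begin

lemma cheb_rec_all:
  "cheb_rec a0 a1 y n = 2 * y * cheb_rec a0 a1 y (n - 1) - cheb_rec a0 a1 y (n - 2)"
proof (cases "n \<ge> 2")
  case True
  then show ?thesis by (subst cheb_rec.simps) simp
next
  case False
  have "cheb_rec a0 a1 y (n - 2) = 2 * y * cheb_rec a0 a1 y (n - 2 + 1) - cheb_rec a0 a1 y (n - 2 + 2)"
    using False by (subst cheb_rec.simps) simp
  then show ?thesis by simp
qed

lemma rec_zero:
  fixes g :: "int \<Rightarrow> complex"
  assumes R: "\<And>n. g n = 2 * y * g (n - 1) - g (n - 2)"
    and g0: "g 0 = 0" and g1: "g 1 = 0"
  shows "g n = 0"
proof -
  have pos: "g (int m) = 0 \<and> g (int m + 1) = 0" for m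
  proof (induction m)
    case 0 then show ?case using g0 g1 by simp
  next
    case (Suc m)
    have "g (int m + 2) = 2 * y * g (int m + 2 - 1) - g (int m + 2 - 2)" by (rule R)
    then have "g (int m + 2) = 0" using Suc by (simp add: add.commute)
    then show ?case using Suc by (simp add: add.commute)
  qed
  have neg: "g (- int m) = 0 \<and> g (1 - int m) = 0" for m
  proof (induction m)
    case 0 then show ?case using g0 g1 by simp
  next
    case (Suc m)
    have "g (1 - int m) = 2 * y * g (1 - int m - 1) - g (1 - int m - 2)" by (rule R)
    moreover have "1 - int m - 2 = - int (Suc m)" "1 - int m - 1 = - int m" "1 - int (Suc m) = - int m" by simp_all
    ultimately show ?case using Suc by simp
  qed
  show ?thesis
  proof (cases "n \<ge> 0")
    case True then show ?thesis using pos[of "nat n"] by simp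
  next
    case False then show ?thesis using neg[of "nat (-n)"] by simp
  qed
qed

lemma cr0[simp]: "cheb_rec a0 a1 y 0 = a0" by (subst cheb_rec.simps) simp
lemma cr1[simp]: "cheb_rec a0 a1 y 1 = a1" by (subst cheb_rec.simps) simp
lemma crm1[simp]: "cheb_rec a0 a1 y (-1) = 2 * y * a0 - a1" by (subst cheb_rec.simps) simp
lemma crm2[simp]: "cheb_rec a0 a1 y (-2) = 2 * y * (2 * y * a0 - a1) - a0"
  by (subst cheb_rec.simps) simp

lemma TU1: "chebT k y = chebU k y - y * chebU (k - 1) y"
proof -
  define g where "g = (\<lambda>k. chebT k y - chebU k y + y * chebU (k - 1) y)"
  have "g k = 0"
  proof (rule rec_zero[where y=y and g=g])
    fix n
    show "g n = 2 * y * g (n - 1) - g (n - 2)"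
    proof -
      have "chebT n y = 2 * y * chebT (n - 1) y - chebT (n - 2) y"
           "chebU n y = 2 * y * chebU (n - 1) y - chebU (n - 2) y"
           "chebU (n - 1) y = 2 * y * chebU (n - 2) y - chebU (n - 3) y"
        unfolding chebT_def chebU_def using cheb_rec_all[of 1 "2*y" y "n-1"] by (simp_all add: cheb_rec_all[of _ _ _ n])
      note e = this
      show ?thesis unfolding g_def by (simp only: e) (simp add: algebra_simps)
    qed
  next
    show "g 0 = 0" unfolding g_def chebT_def chebU_def
      by simp
  next
    show "g 1 = 0" unfolding g_def chebT_def chebU_def
      by simp
  qed
  then show ?thesis unfolding g_def by (simp add: algebra_simps)
qed

lemma TU2: "chebT k y = y * chebT (k - 1) y + (y^2 - 1) * chebU (k - 2) y"
proof -
  define g where "g = (\<lambda>k. chebT k y - y * chebT (k - 1) y - (y^2 - 1) * chebU (k - 2) y)"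
  have "g k = 0"
  proof (rule rec_zero[where y=y and g=g])
    fix n
    show "g n = 2 * y * g (n - 1) - g (n - 2)"
    proof -
      have "chebT n y = 2 * y * chebT (n - 1) y - chebT (n - 2) y"
           "chebT (n - 1) y = 2 * y * chebT (n - 2) y - chebT (n - 3) y"
           "chebU (n - 2) y = 2 * y * chebU (n - 3) y - chebU (n - 4) y"
        unfolding chebT_def chebU_def using cheb_rec_all[of 1 "y" y "n-1"] cheb_rec_all[of 1 "2*y" y "n-2"]
        by (simp_all add: cheb_rec_all[of _ _ _ n])
      note e = this
      show ?thesis unfolding g_def by (simp only: e) (simp add: algebra_simps)
    qed
  next
    show "g 0 = 0" unfolding g_def chebT_def chebU_def
      by (simp add: algebra_simps power2_eq_square)
  next
    show "g 1 = 0" unfolding g_def chebT_def chebU_def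
      by simp
  qed
  then show ?thesis unfolding g_def by (simp add: algebra_simps)
qed

lemma telescope:
  fixes A :: "int \<Rightarrow> complex" and r :: complex
  assumes "n \<ge> c"
  shows "(\<Sum>k\<in>{c..n}. r ^ nat (n - k) * (A k - r * A (k - 1)))
         = A n - r ^ nat (n - c + 1) * A (c - 1)"
proof (rule int_ge_induct[OF assms])
  show "(\<Sum>k\<in>{c..c}. r ^ nat (c - k) * (A k - r * A (k - 1))) = A c - r ^ nat (c - c + 1) * A (c - 1)" by simp
next
  fix m assume m: "c \<le> m" and IH: "(\<Sum>k\<in>{c..m}. r ^ nat (m - k) * (A k - r * A (k - 1))) = A m - r ^ nat (m - c + 1) * A (c - 1)"
  have set: "{c..m+1} = insert (m+1) {c..m}" using m by auto
  have "(\<Sum>k\<in>{c..m+1}. r ^ nat (m + 1 - k) * (A k - r * A (k - 1)))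
      = (A (m+1) - r * A m) + (\<Sum>k\<in>{c..m}. r * (r ^ nat (m - k) * (A k - r * A (k - 1))))"
  proof -
    have "(\<Sum>k\<in>{c..m}. r ^ nat (m + 1 - k) * (A k - r * A (k - 1)))
        = (\<Sum>k\<in>{c..m}. r * (r ^ nat (m - k) * (A k - r * A (k - 1))))"
    proof (rule sum.cong)
      fix k assume "k \<in> {c..m}"
      then have "nat (m + 1 - k) = Suc (nat (m - k))" by auto
      then show "r ^ nat (m + 1 - k) * (A k - r * A (k - 1)) = r * (r ^ nat (m - k) * (A k - r * A (k - 1)))"
        by simp
    qed simp
    then show ?thesis by (simp add: set)
  qed
  also have "\<dots> = A (m+1) - r * A m + r * (A m - r ^ nat (m - c + 1) * A (c - 1))"
    by (simp add: sum_distrib_left[symmetric] IH)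
  also have "\<dots> = A (m+1) - r ^ nat (m + 1 - c + 1) * A (c - 1)"
  proof -
    have "nat (m + 1 - c + 1) = Suc (nat (m - c + 1))" using m by simp
    then show ?thesis by (simp add: algebra_simps)
  qed
  finally show "(\<Sum>k\<in>{c..m+1}. r ^ nat (m + 1 - k) * (A k - r * A (k - 1))) = A (m+1) - r ^ nat (m + 1 - c + 1) * A (c - 1)" .
qed

theorem theorem11:
  fixes x y r :: complex and c n :: int
  assumes "n \<ge> c" and "c < 0 \<longrightarrow> x \<noteq> 0"
  shows "(\<Sum>k\<in>{c..n}. r ^ nat (n - k) * x powi k *
            (r * chebT k y + (x * y - r) * chebU k y))
           = x powi (n + 1) * y * chebU n y - r ^ nat (n - c + 1) * x powi c * y * chebU (c - 1) y \<and>
         (\<Sum>k\<in>{c..n}. r ^ nat (n - k) * x powi k *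
            ((y^2 - 1) * r * chebU (k - 2) y + (x * y - r) * chebT k y))
           = x powi (n + 1) * y * chebT n y - r ^ nat (n - c + 1) * x powi c * y * chebT (c - 1) y"
proof -
  have px: "x powi (k + 1) = x powi k * x" if "k \<in> {c..n}" for k
    using that assms(2) by (intro power_int_add_1) auto
  define A where "A = (\<lambda>k. x powi (k + 1) * y * chebU k y)"
  define B where "B = (\<lambda>k. x powi (k + 1) * y * chebT k y)"
  have 1: "(\<Sum>k\<in>{c..n}. r ^ nat (n - k) * x powi k *
            (r * chebT k y + (x * y - r) * chebU k y))
        = (\<Sum>k\<in>{c..n}. r ^ nat (n - k) * (A k - r * A (k - 1)))"
  proof (rule sum.cong)
    fix k assume k: "k \<in> {c..n}"
    show "r ^ nat (n - k) * x powi k * (r * chebT k y + (x * y - r) * chebU k y)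
        = r ^ nat (n - k) * (A k - r * A (k - 1))"
      unfolding A_def by (simp only: px[OF k] TU1[of k y]) (simp add: algebra_simps)
  qed simp
  have 2: "(\<Sum>k\<in>{c..n}. r ^ nat (n - k) * x powi k *
            ((y^2 - 1) * r * chebU (k - 2) y + (x * y - r) * chebT k y))
        = (\<Sum>k\<in>{c..n}. r ^ nat (n - k) * (B k - r * B (k - 1)))"
  proof (rule sum.cong)
    fix k assume k: "k \<in> {c..n}"
    show "r ^ nat (n - k) * x powi k * ((y^2 - 1) * r * chebU (k - 2) y + (x * y - r) * chebT k y)
        = r ^ nat (n - k) * (B k - r * B (k - 1))"
      unfolding B_def by (simp only: px[OF k] TU2[of k y]) (simp add: algebra_simps)
  qed simp
  show ?thesis
    unfolding 1 2 telescope[OF assms(1)] by (simp add: A_def B_def algebra_simps)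
qed

end
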